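(* Let $R$ and $Q_R$ be as in the context. Then for every $q\in Q_R$ and every $\alpha\in(0,1)$, $$\zeta(q,\alpha)+e^{-i\pi q}\,\zeta(q,1-\alpha)\neq0 .$$
   Context: $\mathbb{H}_\mathbb{R}$ denotes the real quaternions $a+v_1e_1+v_2e_2+v_3e_3$ with $e_1^2=e_2^2=e_3^2=-1$, $e_1e_2=e_3$, $e_2e_3=e_1$, $e_3e_1=e_2$; $\mathbb{H}_\mathbb{C}$ the complex quaternions (complex coefficients, $i$ commuting with every $e_j$). For $q=a+v$, $v=\sum v_je_j$, $|v|=(\sum v_j^2)^{1/2}$. Quaternionic power: for $z\in\mathbb{C}\setminus\{0\}$, $p=b+u\in\mathbb{H}_\mathbb{R}$, $u\ne0$: $z^p:=z^b[\cos(|u|\log z)+\frac{u}{|u|}\sin(|u|\log z)]$ (principal $\log$, $z^b=e^{b\log z}$). Quaternionic Hurwitz zeta: $\zeta(q,a):=\sum_{k\ge0}(a+k)^{-q}$ for $a>0$, $\mathrm{Sc}\,q>1$; classical Hurwitz zeta: $\zeta(s,a)=\sum_{k\ge0}(a+k)^{-s}$. Exponentials $e^{q}:=\sum_j q^j/j!$ in $\mathbb{H}_\mathbb{C}$; for complex $w$, $e^{-i\pi w}$ is the usual complex exponential. Standing assumption: $R\subset\{w\in\mathbb{C}:\mathrm{Re}\,w>1\}$ is a set with $\overline R=R$ such that for every $w\in R$ and every $\alpha\in(0,1)$, $\zeta(w,\alpha)+e^{-i\pi w}\zeta(w,1-\alpha)\neq0$ (such nonempty regions, e.g. small rectangles or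 annular sectors around even integers $2n$, were constructed in earlier work). Define $Q_R:=\{q=a+v\in\mathbb{H}_\mathbb{R}: v\ne0,\ a+i|v|\in R\}$. *)

theory Defs
  imports "HOL-Analysis.Analysis"
begin

text \<open>Real quaternions a + v1 e1 + v2 e2 + v3 e3 as 4-tuples of reals (a, v1, v2, v3);
complex quaternions likewise as 4-tuples of complex numbers (scalar, e1, e2, e3 coefficients).
The product type carries the (Banach) normed vector space structure, used for infinite sums.\<close>

type_synonym rquat = "real \<times> real \<times> real \<times> real"
type_synonym cquat = "complex \<times> complex \<times> complex \<times> complex"

definition cq_of_rq :: "rquat \<Rightarrow> cquat" where
  "cq_of_rq q = (case q of (a, v1, v2, v3) \<Rightarrow>
      (complex_of_real a, complex_of_real v1, complex_of_real v2, complex_of_real v3))"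

text \<open>Hamilton product with e1 e2 = e3, e2 e3 = e1, e3 e1 = e2, ej^2 = -1; i commutes.\<close>
definition cq_mult :: "cquat \<Rightarrow> cquat \<Rightarrow> cquat" where
  "cq_mult x y = (case x of (a0, a1, a2, a3) \<Rightarrow> case y of (b0, b1, b2, b3) \<Rightarrow>
     (a0*b0 - a1*b1 - a2*b2 - a3*b3,
      a0*b1 + a1*b0 + a2*b3 - a3*b2,
      a0*b2 - a1*b3 + a2*b0 + a3*b1,
      a0*b3 + a1*b2 - a2*b1 + a3*b0))"

definition cq_one :: cquat where "cq_one = (1, 0, 0, 0)"

definition cq_scale :: "complex \<Rightarrow> cquat \<Rightarrow> cquat" where
  "cq_scale c x = (case x of (x0, x1, x2, x3) \<Rightarrow> (c*x0, c*x1, c*x2, c*x3))"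

definition cq_power :: "cquat \<Rightarrow> nat \<Rightarrow> cquat" where
  "cq_power x n = (cq_mult x ^^ n) cq_one"

definition cq_exp :: "cquat \<Rightarrow> cquat" where
  "cq_exp x = (\<Sum>j. cq_scale (1 / of_nat (fact j)) (cq_power x j))"

definition vnorm :: "real \<Rightarrow> real \<Rightarrow> real \<Rightarrow> real" where
  "vnorm v1 v2 v3 = sqrt (v1^2 + v2^2 + v3^2)"

text \<open>Quaternionic power z^p for z in C\<setminus>{0}, p = b + u in H_R, u \<noteq> 0:
  z^p = z^b [cos(|u| log z) + u/|u| sin(|u| log z)] (principal log, z^b = e^{b log z}).
  (For u = 0 we set z^p = z^b; this case is not used.)\<close>
definition qpow :: "complex \<Rightarrow> rquat \<Rightarrow> cquat" where
  "qpow z p = (case p of (b, u1, u2, u3) \<Rightarrow>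
     (let n = vnorm u1 u2 u3; zb = exp (complex_of_real b * Ln z) in
      if n = 0 then (zb, 0, 0, 0) else
      (zb * cos (complex_of_real n * Ln z),
       zb * complex_of_real (u1 / n) * sin (complex_of_real n * Ln z),
       zb * complex_of_real (u2 / n) * sin (complex_of_real n * Ln z),
       zb * complex_of_real (u3 / n) * sin (complex_of_real n * Ln z))))"

definition rq_neg :: "rquat \<Rightarrow> rquat" where
  "rq_neg q = (case q of (a, v1, v2, v3) \<Rightarrow> (-a, -v1, -v2, -v3))"

definition qhurwitz :: "rquat \<Rightarrow> real \<Rightarrow> cquat" where
  "qhurwitz q \<alpha> = (\<Sum>k. qpow (complex_of_real (\<alpha> + real k)) (rq_neg q))"

definition hurwitz :: "complex \<Rightarrow> real \<Rightarrow> complex" where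
  "hurwitz s \<alpha> = (\<Sum>k. complex_of_real (\<alpha> + real k) powr (- s))"

definition QR :: "complex set \<Rightarrow> rquat set" where
  "QR R = {(a, v1, v2, v3). (v1, v2, v3) \<noteq> (0, 0, 0) \<and>
             Complex a (vnorm v1 v2 v3) \<in> R}"

end

theory Submission imports Defs begin

lemma sums_Pair2:
  assumes "f sums a" "g sums b"
  shows "(\<lambda>k. (f k, g k)) sums (a, b)"
proof -
  have e: "(\<Sum>k<n. (f k, g k)) = (\<Sum>k<n. f k, \<Sum>k<n. g k)" for n
    by (rule prod_eqI) (simp_all add: fst_sum snd_sum)
  show ?thesis using assms unfolding sums_def e by (intro tendsto_Pair)
qed

definition emb' :: "real \<Rightarrow> real \<Rightarrow> real \<Rightarrow> complex \<Rightarrow> complex \<Rightarrow> cquat" where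
  "emb' u1 u2 u3 x y = (x, y * of_real u1, y * of_real u2, y * of_real u3)"

lemma mult_aux:
  fixes x y x' y' c1 c2 c3 :: complex
  assumes h: "c1 * c1 + c2 * c2 + c3 * c3 = 1"
  shows "(x * x' - y * c1 * (y' * c1) - y * c2 * (y' * c2) - y * c3 * (y' * c3),
      x * (y' * c1) + y * c1 * x' + y * c2 * (y' * c3) - y * c3 * (y' * c2),
      x * (y' * c2) - y * c1 * (y' * c3) + y * c2 * x' + y * c3 * (y' * c1),
      x * (y' * c3) + y * c1 * (y' * c2) - y * c2 * (y' * c1) + y * c3 * x')
    = (x * x' - y * y', (x * y' + y * x') * c1, (x * y' + y * x') * c2, (x * y' + y * x') * c3)"
proof -
  have 0: "x * x' - y * c1 * (y' * c1) - y * c2 * (y' * c2) - y * c3 * (y' * c3) = x * x' - y * y'"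
    using h by algebra
  have 1: "x * (y' * c1) + y * c1 * x' + y * c2 * (y' * c3) - y * c3 * (y' * c2) = (x * y' + y * x') * c1"
    by algebra
  have 2: "x * (y' * c2) - y * c1 * (y' * c3) + y * c2 * x' + y * c3 * (y' * c1) = (x * y' + y * x') * c2"
    by algebra
  have 3: "x * (y' * c3) + y * c1 * (y' * c2) - y * c2 * (y' * c1) + y * c3 * x' = (x * y' + y * x') * c3"
    by algebra
  show ?thesis unfolding 0 1 2 3 ..
qed

lemma unit_complex:
  assumes a: "u1^2 + u2^2 + u3^2 = (1::real)"
  shows "(of_real u1::complex) * of_real u1 + of_real u2 * of_real u2 + of_real u3 * of_real u3 = 1"
proof -
  have "complex_of_real (u1 * u1 + u2 * u2 + u3 * u3) = of_real 1" using a by (simp only: power2_eq_square)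
  then show ?thesis by (simp only: of_real_add of_real_mult of_real_1)
qed

lemma emb'_mult:
  assumes "u1^2 + u2^2 + u3^2 = 1"
  shows "cq_mult (emb' u1 u2 u3 x y) (emb' u1 u2 u3 x' y') = emb' u1 u2 u3 (x * x' - y * y') (x * y' + y * x')"
  unfolding cq_mult_def emb'_def prod.case by (rule mult_aux[OF unit_complex[OF assms]])

definition emb :: "real \<Rightarrow> real \<Rightarrow> real \<Rightarrow> complex \<Rightarrow> complex \<Rightarrow> cquat" where
  "emb u1 u2 u3 P M = emb' u1 u2 u3 ((P + M) / 2) ((P - M) * (- \<i> / 2))"

lemma B0: fixes P M P' M' h i :: complex
  assumes "i * i = -1" "2 * h = 1"
  shows "(P + M) * h * ((P' + M') * h) - (P - M) * (- i * h) * ((P' - M') * (- i * h)) = (P * P' + M * M') * h"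
  using assms by algebra

lemma B1: fixes P M P' M' h i :: complex
  assumes "i * i = -1" "2 * h = 1"
  shows "(P + M) * h * ((P' - M') * - (i * h)) + (P - M) * - (i * h) * ((P' + M') * h) = (P * P' - M * M') * - (i * h)"
  using assms by algebra

lemma emb_mult:
  assumes "u1^2 + u2^2 + u3^2 = 1"
  shows "cq_mult (emb u1 u2 u3 P M) (emb u1 u2 u3 P' M') = emb u1 u2 u3 (P * P') (M * M')"
proof -
  have 1: "(P + M) / 2 * ((P' + M') / 2) - (P - M) * (- \<i> / 2) * ((P' - M') * (- \<i> / 2)) = (P * P' + M * M') / 2"
    unfolding divide_inverse by (rule B0) simp_all
  have 2: "(P + M) / 2 * ((P' - M') * (- \<i> / 2)) + (P - M) * (- \<i> / 2) * ((P' + M') / 2) = (P * P' - M * M') * (- \<i> / 2)"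
    unfolding divide_inverse minus_mult_left[symmetric] by (rule B1) simp_all
  show ?thesis unfolding emb_def emb'_mult[OF assms] 1 2 ..
qed

lemma emb_add: "emb u1 u2 u3 P M + emb u1 u2 u3 P' M' = emb u1 u2 u3 (P + P') (M + M')"
proof -
  have k: "\<And>a b c d k u :: complex. (a - b) * k * u + (c - d) * k * u = (a + c - (b + d)) * k * u"
    by algebra
  show ?thesis unfolding emb_def emb'_def add_Pair k by (simp add: add_divide_distrib)
qed

lemma emb_scale: "cq_scale c (emb u1 u2 u3 P M) = emb u1 u2 u3 (c * P) (c * M)"
proof -
  have k: "\<And>a b k u :: complex. c * ((a - b) * k * u) = (c * a - c * b) * k * u"
    by algebra
  have k2: "c * ((P + M) / 2) = (c * P + c * M) / 2" by (simp add: algebra_simps)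
  show ?thesis unfolding emb_def emb'_def cq_scale_def prod.case k k2 ..
qed

lemma emb_one: "cq_one = emb u1 u2 u3 1 1"
  unfolding emb_def emb'_def cq_one_def by simp

lemma emb_power:
  assumes "u1^2 + u2^2 + u3^2 = 1"
  shows "cq_power (emb u1 u2 u3 P M) j = emb u1 u2 u3 (P ^ j) (M ^ j)"
proof (induction j)
  case 0 then show ?case unfolding cq_power_def by (simp add: emb_one[of u1 u2 u3])
next
  case (Suc j)
  have "cq_power (emb u1 u2 u3 P M) (Suc j) = cq_mult (emb u1 u2 u3 P M) (cq_power (emb u1 u2 u3 P M) j)"
    unfolding cq_power_def by simp
  then show ?case using Suc by (simp add: emb_mult[OF assms])
qed

lemma emb_sums:
  assumes "f sums A" "g sums B"
  shows "(\<lambda>k. emb u1 u2 u3 (f k) (g k)) sums emb u1 u2 u3 A B"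
proof -
  have s: "(\<lambda>k. (f k + g k) / 2) sums ((A + B) / 2)" using sums_add[OF assms] by (rule sums_divide)
  have d: "(\<lambda>k. (f k - g k) * (- \<i> / 2)) sums ((A - B) * (- \<i> / 2))" using sums_diff[OF assms] by (rule sums_mult2)
  show ?thesis unfolding emb_def emb'_def
    by (intro sums_Pair2 s sums_mult2 d)
qed

lemma emb_zero:
  assumes "(u1,u2,u3) \<noteq> (0,0,0)" "emb u1 u2 u3 P M = 0"
  shows "P = 0"
proof -
  let ?d = "(P - M) * (- \<i> / 2)"
  from assms(2) have e: "((P + M) / 2, ?d * of_real u1, ?d * of_real u2, ?d * of_real u3) = (0,0,0,0)"
    unfolding emb_def emb'_def zero_prod_def .
  then have a: "(P + M) / 2 = 0" and b: "?d * of_real u1 = 0" "?d * of_real u2 = 0" "?d * of_real u3 = 0"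
    unfolding prod.inject by blast+
  have "?d = 0" using assms(1) b by auto
  then have "P - M = 0" by simp
  moreover have "P + M = 0" using a by simp
  moreover have "2 * P = (P + M) + (P - M)" by simp
  ultimately show ?thesis by simp
qed


lemma hz_summable:
  assumes s: "1 < Re s" and a: "0 < \<alpha>"
  shows "summable (\<lambda>k. complex_of_real (\<alpha> + real k) powr (- s))"
proof (rule summable_comparison_test'[where g = "\<lambda>k. real k powr (- Re s)" and N = 1])
  show "summable (\<lambda>k. real k powr (- Re s))"
    using summable_real_powr_iff[of "- Re s"] s by simp
next
  fix k :: nat assume k: "1 \<le> k"
  have "norm (complex_of_real (\<alpha> + real k) powr (- s)) = (\<alpha> + real k) powr (- Re s)"
    using a by (subst norm_powr_real_powr) auto
  also have "\<dots> \<le> real k powr (- Re s)"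
    using k a s by (intro powr_mono2') auto
  finally show "norm (complex_of_real (\<alpha> + real k) powr (- s)) \<le> real k powr (- Re s)" .
qed

lemma hz_sums:
  assumes s: "1 < Re s" and a: "0 < \<alpha>"
  shows "(\<lambda>k. complex_of_real (\<alpha> + real k) powr (- s)) sums hurwitz s \<alpha>"
  unfolding hurwitz_def using hz_summable[OF assms] by (rule summable_sums)

lemma exp_sums': "(\<lambda>j. 1 / of_nat (fact j) * z ^ j) sums exp (z::complex)"
proof -
  have "(\<lambda>j. z ^ j /\<^sub>R fact j) = (\<lambda>j. 1 / of_nat (fact j) * z ^ j)"
    by (simp add: scaleR_conv_of_real divide_inverse)
  then show ?thesis using exp_converges[of z] by simp
qed

lemma qpow_emb:
  fixes a v1 v2 v3 t :: real
  assumes t: "0 < t" and n: "vnorm v1 v2 v3 \<noteq> 0"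
  defines "n \<equiv> vnorm v1 v2 v3"
  defines "w \<equiv> of_real a + \<i> * of_real n"
  defines "w' \<equiv> of_real a - \<i> * of_real n"
  shows "qpow (of_real t) (rq_neg (a, v1, v2, v3)) =
           emb (v1 / n) (v2 / n) (v3 / n) (of_real t powr (- w)) (of_real t powr (- w'))"
proof -
  define L where "L = Ln (complex_of_real t)"
  define zb where "zb = exp (complex_of_real (- a) * L)"
  define E1 where "E1 = exp (\<i> * (of_real n * L))"
  define E2 where "E2 = exp (- (\<i> * (of_real n * L)))"
  have nn: "vnorm (- v1) (- v2) (- v3) = n" unfolding n_def vnorm_def by simp
  have tz: "complex_of_real t \<noteq> 0" using t by simp
  have P: "of_real t powr (- w) = zb * E2"
    unfolding powr_def zb_def E2_def L_def w_def using tz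
    by (simp add: exp_add[symmetric] algebra_simps)
  have M: "of_real t powr (- w') = zb * E1"
    unfolding powr_def zb_def E1_def L_def w'_def using tz
    by (simp add: exp_add[symmetric] algebra_simps)
  have c: "cos (of_real n * L) = (E1 + E2) / 2" unfolding E1_def E2_def by (rule cos_exp_eq)
  have s: "sin (of_real n * L) = (E1 - E2) * (- \<i> / 2)"
    unfolding E1_def E2_def sin_exp_eq by (simp add: field_simps)
  have q: "qpow (of_real t) (rq_neg (a, v1, v2, v3)) =
     (zb * ((E1 + E2) / 2), zb * of_real (- v1 / n) * ((E1 - E2) * (- \<i> / 2)),
      zb * of_real (- v2 / n) * ((E1 - E2) * (- \<i> / 2)), zb * of_real (- v3 / n) * ((E1 - E2) * (- \<i> / 2)))"
    unfolding qpow_def rq_neg_def prod.case Let_def nn using n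
    by (simp only: n_def[symmetric] c s L_def[symmetric] zb_def[symmetric] if_False) 
  have k1: "zb * ((E1 + E2) / 2) = (zb * E2 + zb * E1) / 2" by (simp add: algebra_simps)
  have k2: "\<And>u. zb * of_real (- u / n) * ((E1 - E2) * (- \<i> / 2)) = (zb * E2 - zb * E1) * (- \<i> / 2) * of_real (u / n)"
    unfolding minus_divide_left[symmetric] of_real_minus by algebra
  show ?thesis unfolding q P M emb_def emb'_def k1 k2 ..
qed


lemma cq_of_rq_emb:
  fixes a v1 v2 v3 n :: real
  assumes n: "n \<noteq> 0"
  defines "w \<equiv> of_real a + \<i> * of_real n"
  defines "w' \<equiv> of_real a - \<i> * of_real n"
  shows "cq_of_rq (a, v1, v2, v3) = emb (v1 / n) (v2 / n) (v3 / n) w w'"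
proof -
  have 1: "(w + w') / 2 = of_real a" unfolding w_def w'_def by simp
  have 2: "(w - w') * (- \<i> / 2) = of_real n" unfolding w_def w'_def by (simp add: field_simps)
  have 3: "\<And>v. complex_of_real n * of_real (v / n) = of_real v" using n by (simp add: field_simps)
  show ?thesis unfolding cq_of_rq_def emb_def emb'_def prod.case 1 2 3 ..
qed

theorem proposition3:
  fixes R :: "complex set" and q :: rquat and \<alpha> :: real
  assumes R_half: "R \<subseteq> {w. Re w > 1}"
    and R_conj: "cnj ` R = R"
    and R_nonvan: "\<And>w \<beta>. w \<in> R \<Longrightarrow> 0 < \<beta> \<Longrightarrow> \<beta> < 1 \<Longrightarrow>
                      hurwitz w \<beta> + exp (- \<i> * of_real pi * w) * hurwitz w (1 - \<beta>) \<noteq> 0"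
    and q: "q \<in> QR R"
    and \<alpha>: "0 < \<alpha>" "\<alpha> < 1"
  shows "qhurwitz q \<alpha> +
           cq_mult (cq_exp (cq_scale (- \<i> * of_real pi) (cq_of_rq q))) (qhurwitz q (1 - \<alpha>)) \<noteq> 0"
proof
  obtain a v1 v2 v3 where qe: "q = (a, v1, v2, v3)" by (cases q) auto
  define n where "n = vnorm v1 v2 v3"
  have v0: "(v1, v2, v3) \<noteq> (0, 0, 0)" and wR: "Complex a n \<in> R"
    using q unfolding qe QR_def n_def by auto
  have "v1^2 > 0 \<or> v2^2 > 0 \<or> v3^2 > 0" using v0 by auto
  moreover have "0 \<le> v1^2" "0 \<le> v2^2" "0 \<le> v3^2" by simp_all
  ultimately have sq: "v1^2 + v2^2 + v3^2 > 0" by linarith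
  have nsq: "n^2 = v1^2 + v2^2 + v3^2" unfolding n_def vnorm_def
    by (simp add: add_nonneg_nonneg)
  have n0: "n \<noteq> 0" using sq nsq by auto
  define u1 u2 u3 where "u1 = v1 / n" and "u2 = v2 / n" and "u3 = v3 / n"
  have unit: "u1^2 + u2^2 + u3^2 = 1" unfolding u1_def u2_def u3_def
    using n0 nsq sq by (simp add: power_divide add_divide_distrib[symmetric])
  have u0: "(u1, u2, u3) \<noteq> (0, 0, 0)" unfolding u1_def u2_def u3_def using v0 n0 by auto
  define w where "w = of_real a + \<i> * of_real n"
  define w' where "w' = of_real a - \<i> * of_real n"
  have wR': "w \<in> R" using wR unfolding w_def Complex_eq .
  have Rew: "1 < Re w" using wR' R_half by auto
  have Rew': "1 < Re w'" using Rew unfolding w_def w'_def by simp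
  have QH: "qhurwitz q \<beta> = emb u1 u2 u3 (hurwitz w \<beta>) (hurwitz w' \<beta>)" if b: "0 < \<beta>" for \<beta>
  proof -
    have "qpow (complex_of_real (\<beta> + real k)) (rq_neg q) =
       emb u1 u2 u3 (complex_of_real (\<beta> + real k) powr (- w)) (complex_of_real (\<beta> + real k) powr (- w'))" for k
      unfolding qe u1_def u2_def u3_def w_def w'_def n_def
      by (rule qpow_emb) (use b n0 n_def in auto)
    then have "(\<lambda>k. qpow (complex_of_real (\<beta> + real k)) (rq_neg q)) sums emb u1 u2 u3 (hurwitz w \<beta>) (hurwitz w' \<beta>)"
      using emb_sums[OF hz_sums[OF Rew b] hz_sums[OF Rew' b]] by simp
    then show ?thesis unfolding qhurwitz_def by (rule sums_unique[symmetric])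
  qed
  define c where "c = - \<i> * complex_of_real pi"
  have X: "cq_scale c (cq_of_rq q) = emb u1 u2 u3 (c * w) (c * w')"
    unfolding qe u1_def u2_def u3_def w_def w'_def cq_of_rq_emb[OF n0] emb_scale ..
  have EX: "cq_exp (cq_scale c (cq_of_rq q)) = emb u1 u2 u3 (exp (c * w)) (exp (c * w'))"
  proof -
    have "cq_scale (1 / of_nat (fact j)) (cq_power (cq_scale c (cq_of_rq q)) j) =
          emb u1 u2 u3 (1 / of_nat (fact j) * (c * w) ^ j) (1 / of_nat (fact j) * (c * w') ^ j)" for j
      unfolding X emb_power[OF unit] emb_scale ..
    then have "(\<lambda>j. cq_scale (1 / of_nat (fact j)) (cq_power (cq_scale c (cq_of_rq q)) j)) sums
           emb u1 u2 u3 (exp (c * w)) (exp (c * w'))"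
      using emb_sums[OF exp_sums' exp_sums'] by simp
    then show ?thesis unfolding cq_exp_def by (rule sums_unique[symmetric])
  qed
  assume eq: "qhurwitz q \<alpha> +
           cq_mult (cq_exp (cq_scale (- \<i> * of_real pi) (cq_of_rq q))) (qhurwitz q (1 - \<alpha>)) = 0"
  have QH2: "qhurwitz q (1 - \<alpha>) = emb u1 u2 u3 (hurwitz w (1 - \<alpha>)) (hurwitz w' (1 - \<alpha>))"
    using QH \<alpha> by simp
  have "emb u1 u2 u3 (hurwitz w \<alpha> + exp (c * w) * hurwitz w (1 - \<alpha>))
           (hurwitz w' \<alpha> + exp (c * w') * hurwitz w' (1 - \<alpha>)) = 0"
    using eq unfolding c_def[symmetric] EX QH[OF \<alpha>(1)] QH2 emb_mult[OF unit] emb_add .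
  then have "hurwitz w \<alpha> + exp (c * w) * hurwitz w (1 - \<alpha>) = 0" by (rule emb_zero[OF u0])
  then show False using R_nonvan[OF wR' \<alpha>] unfolding c_def by simp
qed

end
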